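(* Let $\mathcal{G}$ be an additive arithmetical semigroup (with the setup below), $S\subseteq\mathcal{P}$, and let $f\colon\mathbb{Z}_{\ge0}\to\mathbb{C}$ satisfy $f(0)=0$. Then for every $g\in\mathcal{G}$, $$\sum_{h\mid g}\mu(h)\,1_{\mathfrak{D}(\mathcal{G},S)}(h)\,f(d_-(h))=-Q_S(g)\,f(d^+(g)).$$
   Context: $\mathcal{G}$ is a commutative monoid (written additively, identity $e_{\mathcal{G}}$) freely generated by a countable set $\mathcal{P}$ of primes, with an additive degree map $\partial\colon\mathcal{G}\to\mathbb{Z}_{\ge0}$, $\partial(e_{\mathcal{G}})=0$, $\partial(P)>0$ for primes. $h\mid g$ means $g=h+r$ for some $r\in\mathcal{G}$. For $g\ne e_{\mathcal{G}}$: $d_-(g)=\min\{\partial(P):P\in\mathcal{P},P\mid g\}$, $d^+(g)=\max\{\partial(P):P\mid g\}$; conventions $d_-(e_{\mathcal{G}})=0$ and $d^+(e_{\mathcal{G}})=0$. $g$ is distinguishable if $g\ne e_{\mathcal{G}}$ and exactly one prime $P_{\min}(g)\mid g$ has degree $d_-(g)$; $\mathfrak{D}(\mathcal{G},S)=\{g\text{ distinguishable}:P_{\min}(g)\in S\}\cup\{e_{\mathcal{G}}\}$, with indicator function $1_{\mathfrak{D}(\mathcal{G},S)}$. $Q_S(g)=\#\{P\in S:P\mid g,\ \partial(P)=d^+(g)\}$. $\mu$ is the Möbius function ($\mu(e_{\mathcal{G}})=1$, $(-1)^k$ on sums of $k$ distinct primes, $0$ if $2P\mid g$ for some prime $P$).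 *)

theory Defs
  imports Complex_Main "HOL-Library.Multiset" "HOL-Library.Countable"
begin

text \<open>The free commutative monoid on the primes (elements of type 'p) is represented by
finite multisets of primes: addition is multiset sum, the identity is the empty multiset,
and divisibility h | g is sub-multiset inclusion.\<close>

definition gdeg :: "('p \<Rightarrow> nat) \<Rightarrow> 'p multiset \<Rightarrow> nat" where
  "gdeg deg g = sum_mset (image_mset deg g)"

definition d_minus :: "('p \<Rightarrow> nat) \<Rightarrow> 'p multiset \<Rightarrow> nat" where
  "d_minus deg g = (if g = {#} then 0 else Min (deg ` set_mset g))"

definition d_plus :: "('p \<Rightarrow> nat) \<Rightarrow> 'p multiset \<Rightarrow> nat" where
  "d_plus deg g = (if g = {#} then 0 else Max (deg ` set_mset g))"

definition distinguishable :: "('p \<Rightarrow> nat) \<Rightarrow> 'p multiset \<Rightarrow> bool" where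
  "distinguishable deg g \<longleftrightarrow>
     g \<noteq> {#} \<and> card {P. P \<in># g \<and> deg P = d_minus deg g} = 1"

definition P_min :: "('p \<Rightarrow> nat) \<Rightarrow> 'p multiset \<Rightarrow> 'p" where
  "P_min deg g = (THE P. P \<in># g \<and> deg P = d_minus deg g)"

definition in_D :: "('p \<Rightarrow> nat) \<Rightarrow> 'p set \<Rightarrow> 'p multiset \<Rightarrow> bool" where
  "in_D deg S g \<longleftrightarrow> g = {#} \<or> (distinguishable deg g \<and> P_min deg g \<in> S)"

definition ind_D :: "('p \<Rightarrow> nat) \<Rightarrow> 'p set \<Rightarrow> 'p multiset \<Rightarrow> complex" where
  "ind_D deg S g = (if in_D deg S g then 1 else 0)"

definition Q_S :: "('p \<Rightarrow> nat) \<Rightarrow> 'p set \<Rightarrow> 'p multiset \<Rightarrow> nat" where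
  "Q_S deg S g = card {P \<in> S. P \<in># g \<and> deg P = d_plus deg g}"

definition moebius :: "'p multiset \<Rightarrow> int" where
  "moebius g = (if \<forall>P. count g P \<le> 1 then (-1) ^ size g else 0)"

end

theory Submission
  imports Defs
begin

lemma alt_sum_Pow:
  assumes "finite B"
  shows "(\<Sum>U\<in>Pow B. (-1::complex)^card U) = (if B = {} then 1 else 0)"
proof -
  have "(\<Prod>x\<in>B. (-1::complex) + 1) = (\<Sum>X\<in>Pow B. (\<Prod>x\<in>X. -1) * (\<Prod>x\<in>B-X. 1))"
    by (rule prod_add[OF assms])
  then have "(\<Sum>U\<in>Pow B. (-1::complex)^card U) = 0 ^ card B" by simp
  then show ?thesis using assms by (simp add: power_0_left)
qed

lemma finite_submsets: "finite {h. h \<subseteq># (g::'a multiset)}"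
proof -
  have "{h. h \<subseteq># g} \<subseteq> mset ` {xs. set xs \<subseteq> set_mset g \<and> length xs \<le> size g}"
  proof
    fix h assume "h \<in> {h. h \<subseteq># g}"
    hence h: "h \<subseteq># g" by simp
    obtain xs where xs: "mset xs = h" using ex_mset by blast
    have "set xs \<subseteq> set_mset g" using xs h
      by (metis set_mset_mset set_mset_mono) 
    moreover have "length xs \<le> size g" using xs h
      by (metis size_mset size_mset_mono)
    ultimately show "h \<in> mset ` {xs. set xs \<subseteq> set_mset g \<and> length xs \<le> size g}"
      using xs by blast
  qed
  moreover have "finite {xs. set xs \<subseteq> set_mset g \<and> length xs \<le> size g}"
    by (rule finite_lists_length_le) simp
  ultimately show ?thesis by (meson finite_imageI finite_subset)
qed

theorem lemma2p2:
  fixes deg :: "'p::countable \<Rightarrow> nat" and S :: "'p set" and f :: "nat \<Rightarrow> complex"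
    and g :: "'p multiset"
  assumes deg_pos: "\<And>P. deg P > 0"
    and fin_deg: "\<And>n. finite {P. deg P = n}"
    and f0: "f 0 = 0"
  shows "(\<Sum>h\<in>{h. h \<subseteq># g}. of_int (moebius h) * ind_D deg S h * f (d_minus deg h))
         = - of_nat (Q_S deg S g) * f (d_plus deg g)"
proof -
  define A where "A = set_mset g"
  define F where "F h = of_int (moebius h) * ind_D deg S h * f (d_minus deg h)" for h
  define um where "um T P \<longleftrightarrow> P \<in> T \<and> (\<forall>Q\<in>T. Q \<noteq> P \<longrightarrow> deg P < deg Q)" for T P
  define dp where "dp = d_plus deg g"
  have finA: "finite A" by (simp add: A_def)
  have step1: "(\<Sum>h\<in>{h. h \<subseteq># g}. F h) = (\<Sum>T\<in>Pow A. F (mset_set T))"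
  proof -
    have "(\<Sum>h\<in>{h. h \<subseteq># g}. F h) = (\<Sum>h\<in>mset_set ` Pow A. F h)"
    proof (rule sum.mono_neutral_right[OF finite_submsets])
      show "mset_set ` Pow A \<subseteq> {h. h \<subseteq># g}"
      proof safe
        fix T assume T: "T \<subseteq> A"
        hence fT: "finite T" using finA finite_subset by blast
        show "mset_set T \<subseteq># g"
          unfolding subseteq_mset_def
        proof
          fix x show "count (mset_set T) x \<le> count g x"
            using T fT by (auto simp: count_mset_set' A_def)
        qed
      qed
      show "\<forall>h\<in>{h. h \<subseteq># g} - mset_set ` Pow A. F h = 0"
      proof
        fix h assume h: "h \<in> {h. h \<subseteq># g} - mset_set ` Pow A"
        have "\<not> (\<forall>P. count h P \<le> 1)"
        proof
          assume c: "\<forall>P. count h P \<le> 1"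
          have "h = mset_set (set_mset h)"
          proof (rule multiset_eqI)
            fix x show "count h x = count (mset_set (set_mset h)) x"
              proof (cases "x \<in># h")
              case True
              hence "count h x > 0" by simp
              hence "count h x = 1" using c[rule_format, of x] by linarith
              thus ?thesis using True by (simp add: count_mset_set')
            qed (simp add: count_mset_set' not_in_iff)
          qed
          moreover have "set_mset h \<in> Pow A" using h
            by (auto simp: A_def dest: mset_subset_eqD)
          ultimately show False using h by blast
        qed
        thus "F h = 0" unfolding F_def moebius_def by auto
      qed
    qed
    also have "\<dots> = (\<Sum>T\<in>Pow A. F (mset_set T))"
    proof (rule sum.reindex[unfolded comp_def])
      show "inj_on mset_set (Pow A)"
      proof (rule inj_onI)
        fix X Y assume "X \<in> Pow A" "Y \<in> Pow A" "mset_set X = mset_set Y"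
        thus "X = Y" using finA
          by (metis PowD finite_set_mset_mset_set finite_subset)
      qed
    qed
    finally show ?thesis .
  qed
  have step2: "F (mset_set T) = (\<Sum>P\<in>A\<inter>S. if um T P then (-1)^card T * f (deg P) else 0)"
    if T: "T \<subseteq> A" for T
  proof -
    have fT: "finite T" using T finA finite_subset by blast
    define m where "m = mset_set T"
    have sm: "set_mset m = T" using fT by (simp add: m_def)
    have mob: "moebius m = (-1)^card T"
      using fT by (simp add: moebius_def m_def count_mset_set')
    show ?thesis
    proof (cases "T = {}")
      case True
      thus ?thesis by (simp add: F_def d_minus_def f0 um_def)
    next
      case ne: False
      hence mne: "m \<noteq> {#}" using sm by auto
      have dm: "d_minus deg m = Min (deg ` T)" using mne sm by (simp add: d_minus_def)
      show ?thesis
      proof (cases "\<exists>P. um T P")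
        case True
        then obtain P where P: "um T P" by blast
        have PT: "P \<in> T" using P um_def by blast
        have dmP: "d_minus deg m = deg P"
          unfolding dm
        proof (rule Min_eqI)
          show "finite (deg ` T)" using fT by simp
          show "\<And>y. y \<in> deg ` T \<Longrightarrow> deg P \<le> y" using P unfolding um_def
            by (metis imageE less_or_eq_imp_le)
          show "deg P \<in> deg ` T" using PT by simp
        qed
        have setP: "{Q. Q \<in># m \<and> deg Q = d_minus deg m} = {P}"
          using P PT unfolding dmP sm um_def by auto
        have dist: "distinguishable deg m" using mne setP by (simp add: distinguishable_def)
        have pm: "P_min deg m = P"
          unfolding P_min_def using setP by (metis (mono_tags, lifting) mem_Collect_eq singletonD singletonI the_equality)
        have lhs: "F (mset_set T) = (if P \<in> S then (-1)^card T * f (deg P) else 0)"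
          using dist pm mob dmP mne by (simp add: F_def m_def[symmetric] ind_D_def in_D_def)
        have "(\<Sum>P'\<in>A\<inter>S. if um T P' then (-1)^card T * f (deg P') else 0)
            = (\<Sum>P'\<in>A\<inter>S. if P' = P then (-1)^card T * f (deg P) else 0)"
        proof (rule sum.cong)
          fix P' assume "P' \<in> A \<inter> S"
          have "um T P' \<longleftrightarrow> P' = P"
          proof
            assume u: "um T P'"
            show "P' = P"
            proof (rule ccontr)
              assume "P' \<noteq> P"
              hence "deg P' < deg P" "deg P < deg P'" using u P unfolding um_def by auto
              thus False by simp
            qed
          qed (use P in simp)
          thus "(if um T P' then (-1)^card T * f (deg P') else 0)
              = (if P' = P then (-1)^card T * f (deg P) else 0)" by simp
        qed simp
        also have "\<dots> = (if P \<in> S then (-1)^card T * f (deg P) else 0)"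
          using PT T finA by (auto simp: sum.delta)
        finally show ?thesis using lhs by simp
      next
        case False
        have "\<not> distinguishable deg m"
        proof
          assume "distinguishable deg m"
          then have "card {Q. Q \<in># m \<and> deg Q = d_minus deg m} = 1"
            by (simp add: distinguishable_def)
          then obtain P where setP: "{Q. Q \<in># m \<and> deg Q = d_minus deg m} = {P}"
            by (meson card_1_singletonE)
          have PT: "P \<in> T" and dP: "deg P = Min (deg ` T)" using setP sm dm by auto
          have "um T P"
            unfolding um_def
          proof (intro conjI ballI impI PT)
            fix Q assume Q: "Q \<in> T" "Q \<noteq> P"
            have "deg P \<le> deg Q" unfolding dP using Q fT by simp
            moreover have "deg Q \<noteq> deg P" using Q setP sm dm dP by auto
            ultimately show "deg P < deg Q" by simp
          qed
          thus False using False by blast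
        qed
        hence "F (mset_set T) = 0" using mne
          by (simp add: F_def m_def[symmetric] ind_D_def in_D_def)
        moreover have "(\<Sum>P\<in>A\<inter>S. if um T P then (-1)^card T * f (deg P) else 0) = 0"
          using False by simp
        ultimately show ?thesis by simp
      qed
    qed
  qed
  have step4: "(\<Sum>T\<in>Pow A. if um T P then (-1)^card T * f (deg P) else 0)
      = (if deg P = dp then - f (deg P) else 0)" if PA: "P \<in> A" for P
  proof -
    define B where "B = {Q\<in>A. deg P < deg Q}"
    have fB: "finite B" using finA by (simp add: B_def)
    have PB: "P \<notin> B" by (simp add: B_def)
    have eq: "{T\<in>Pow A. um T P} = insert P ` Pow B"
    proof
      show "{T\<in>Pow A. um T P} \<subseteq> insert P ` Pow B"
      proof
        fix T assume T: "T \<in> {T\<in>Pow A. um T P}"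
        hence "T = insert P (T - {P})" "T - {P} \<in> Pow B"
          using T by (auto simp: um_def B_def)
        thus "T \<in> insert P ` Pow B" by blast
      qed
      show "insert P ` Pow B \<subseteq> {T\<in>Pow A. um T P}"
        using PA by (auto simp: um_def B_def)
    qed
    have "(\<Sum>T\<in>Pow A. if um T P then (-1)^card T * f (deg P) else 0)
        = (\<Sum>T\<in>{T\<in>Pow A. um T P}. (-1)^card T * f (deg P))"
      using finA by (intro sum.inter_filter[symmetric]) simp
    also have "\<dots> = (\<Sum>T\<in>insert P ` Pow B. (-1)^card T * f (deg P))" by (simp only: eq)
    also have "\<dots> = (\<Sum>U\<in>Pow B. (-1)^card (insert P U) * f (deg P))"
    proof (rule sum.reindex[unfolded comp_def])
      show "inj_on (insert P) (Pow B)"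
        using PB by (auto intro!: inj_onI)
    qed
    also have "\<dots> = (\<Sum>U\<in>Pow B. - f (deg P) * (-1)^card U)"
    proof (rule sum.cong)
      fix U assume U: "U \<in> Pow B"
      hence "card (insert P U) = Suc (card U)" using PB fB
        by (meson PowD card_insert_disjoint finite_subset subsetD)
      thus "(-1)^card (insert P U) * f (deg P) = - f (deg P) * (-1)^card U" by simp
    qed simp
    also have "\<dots> = - f (deg P) * (if B = {} then 1 else 0)"
      by (subst sum_distrib_left[symmetric]) (simp add: alt_sum_Pow[OF fB])
    also have "(B = {}) \<longleftrightarrow> deg P = dp"
    proof -
      have gne: "g \<noteq> {#}" using PA A_def by auto
      have dpd: "dp = Max (deg ` A)" using gne by (simp add: dp_def d_plus_def A_def)
      show ?thesis
      proof
        assume "B = {}"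
        hence "\<forall>Q\<in>A. deg Q \<le> deg P" by (auto simp: B_def not_less)
        thus "deg P = dp" unfolding dpd using PA finA
          by (intro Max_eqI[symmetric]) auto
      next
        assume "deg P = dp"
        hence "\<forall>Q\<in>A. deg Q \<le> deg P" unfolding dpd using finA by simp
        thus "B = {}" by (auto simp: B_def not_less)
      qed
    qed
    finally show ?thesis by simp
  qed
  have "(\<Sum>h\<in>{h. h \<subseteq># g}. F h)
      = (\<Sum>T\<in>Pow A. \<Sum>P\<in>A\<inter>S. if um T P then (-1)^card T * f (deg P) else 0)"
    unfolding step1 by (rule sum.cong) (auto simp: step2)
  also have "\<dots> = (\<Sum>P\<in>A\<inter>S. \<Sum>T\<in>Pow A. if um T P then (-1)^card T * f (deg P) else 0)"
    by (rule sum.swap)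
  also have "\<dots> = (\<Sum>P\<in>A\<inter>S. if deg P = dp then - f dp else 0)"
    by (rule sum.cong) (auto simp: step4)
  also have "\<dots> = (\<Sum>P\<in>{P\<in>A\<inter>S. deg P = dp}. - f dp)"
    using finA by (intro sum.inter_filter[symmetric]) simp
  also have "\<dots> = - of_nat (card {P\<in>A\<inter>S. deg P = dp}) * f dp" by simp
  also have "{P\<in>A\<inter>S. deg P = dp} = {P \<in> S. P \<in># g \<and> deg P = d_plus deg g}"
    by (auto simp: A_def dp_def)
  finally show ?thesis by (simp add: F_def Q_S_def dp_def)
qed

end
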